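(* Let $R$ be an abelian ring and let $a\in R$ be a weakly clean element. Then $ae$ is weakly clean for every idempotent $e\in R$.
   Context: Rings are associative with identity; $R$ is abelian if every idempotent is central. $U(R)$ denotes the units and $Idem(R)$ the idempotents. An element $x$ is weakly clean if $x=u+f$ or $x=u-f$ for some $u\in U(R)$, $f\in Idem(R)$. *)

theory Defs
  imports Main
begin

definition is_unit :: "'a::ring_1 \<Rightarrow> bool" where
  "is_unit u \<longleftrightarrow> (\<exists>v. u * v = 1 \<and> v * u = 1)"

definition idem :: "'a::ring_1 \<Rightarrow> bool" where
  "idem e \<longleftrightarrow> e * e = e"

definition abelian_ring :: "'a::ring_1 itself \<Rightarrow> bool" where
  "abelian_ring _ \<longleftrightarrow> (\<forall>e::'a. idem e \<longrightarrow> (\<forall>x. e * x = x * e))"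

definition weakly_clean :: "'a::ring_1 \<Rightarrow> bool" where
  "weakly_clean x \<longleftrightarrow> (\<exists>u f. is_unit u \<and> idem f \<and> (x = u + f \<or> x = u - f))"

end

theory Submission
  imports Defs
begin

theorem proposition2p6:
  fixes a e :: "'a::ring_1"
  assumes "abelian_ring TYPE('a)"
    and "weakly_clean a"
    and "idem e"
  shows "weakly_clean (a * e)"
proof -
  have ee: "e * e = e" using assms(3) by (simp add: idem_def)
  have ce: "\<And>x. e * x = x * e" using assms(1,3) by (simp add: abelian_ring_def)
  obtain u f where u: "is_unit u" and f: "idem f" and a: "a = u + f \<or> a = u - f"
    using assms(2) by (auto simp: weakly_clean_def)
  obtain v where uv: "u * v = 1" "v * u = 1" using u by (auto simp: is_unit_def)
  have ff: "f * f = f" using f by (simp add: idem_def)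
  have cf: "e * f = f * e" using ce by simp
  have cu: "e * u = u * e" "e * v = v * e" using ce by simp_all
  have e1: "e * (1 - e) = 0" "(1 - e) * e = 0" "(1 - e) * (1 - e) = 1 - e"
    using ee by (simp_all add: algebra_simps)
  have uee: "u * e * (v * e) = e"
  proof -
    have "u * e * (v * e) = u * (e * v) * e" by (simp add: mult.assoc)
    also have "\<dots> = u * v * (e * e)" by (simp add: cu mult.assoc)
    finally show ?thesis using uv ee by simp
  qed
  have vee: "v * e * (u * e) = e"
  proof -
    have "v * e * (u * e) = v * (e * u) * e" by (simp add: mult.assoc)
    also have "\<dots> = v * u * (e * e)" by (simp add: cu mult.assoc)
    finally show ?thesis using uv ee by simp
  qed
  have x1: "x * e * (1 - e) = 0" for x using e1 by (simp add: mult.assoc)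
  have x2: "(1 - e) * (x * e) = 0" for x
  proof -
    have "(1 - e) * (x * e) = (1 - e) * (e * x)" by (simp add: ce)
    also have "\<dots> = 0" using e1 by (simp add: mult.assoc[symmetric])
    finally show ?thesis .
  qed
  have unit1: "is_unit (u * e + s * (1 - e))" if s: "s = 1 \<or> s = -1" for s :: 'a
  proof -
    have ss: "s * s = 1" using s by auto

    have A: "(u * e + s * (1 - e)) * (v * e + s * (1 - e)) = 1"
    proof -
      have "(u * e + s * (1 - e)) * (v * e + s * (1 - e)) =
        u * e * (v * e) + s * (u * e * (1 - e)) + s * ((1 - e) * (v * e)) + (s * s) * ((1 - e) * (1 - e))"
        using s by (auto simp: algebra_simps)
      also have "\<dots> = e + (1 - e)" using uee x1 x2 e1 ss by simp
      finally show ?thesis by simp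
    qed
    have B: "(v * e + s * (1 - e)) * (u * e + s * (1 - e)) = 1"
    proof -
      have "(v * e + s * (1 - e)) * (u * e + s * (1 - e)) =
        v * e * (u * e) + s * (v * e * (1 - e)) + s * ((1 - e) * (u * e)) + (s * s) * ((1 - e) * (1 - e))"
        using s by (auto simp: algebra_simps)
      also have "\<dots> = e + (1 - e)" using vee x1 x2 e1 ss by simp
      finally show ?thesis by simp
    qed
    show ?thesis using A B unfolding is_unit_def by blast
  qed
  have idg: "idem (f * e + (1 - e))"
  proof -
    have "(f * e + (1 - e)) * (f * e + (1 - e)) = f * e * (f * e) + f * e * (1 - e) + (1 - e) * (f * e) + (1 - e) * (1 - e)"
      by (simp add: algebra_simps)
    also have "f * e * (f * e) = f * e"
    proof -
      have "f * e * (f * e) = f * (e * f) * e" by (simp add: mult.assoc)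
      also have "\<dots> = (f * f) * (e * e)" by (simp add: cf mult.assoc)
      finally show ?thesis using ff ee by simp
    qed
    finally show ?thesis using x1 x2 e1 by (simp add: idem_def)
  qed
  from a show ?thesis
  proof
    assume a: "a = u + f"
    have "a * e = (u * e + (-1) * (1 - e)) + (f * e + (1 - e))" using a by (simp add: algebra_simps)
    thus ?thesis using unit1[of "-1"] idg unfolding weakly_clean_def by blast
  next
    assume a: "a = u - f"
    have "a * e = (u * e + 1 * (1 - e)) - (f * e + (1 - e))" unfolding a by (simp add: algebra_simps)
    thus ?thesis using unit1[of 1] idg unfolding weakly_clean_def by blast
  qed
qed

end
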